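(* Assume conditions (I)–(IX) of the context and let $d=\min\{4-2(a+b),\,2-2b,\,2-(a+c),\,2-4a\}$. Then there is $K>0$ such that for each $j\in\mathbb N$ and all $\varepsilon>0$ small enough, \[\lambda_j(-\tilde\Delta_\varepsilon)-\Big(\frac{\pi}{2\varepsilon}\Big)^2\le\lambda_j\Big(-\Delta_{\mathbb R}+\frac{|\Theta_\varepsilon'(s)|^2}{2}\Big)+K\varepsilon^{d}.\]
   Context: Fix $n\ge1$, $0<a<1/3$, $\Lambda=\mathbb R\times(-1,1)$. $\Theta:\mathbb R\to\mathbb R^n$ is $C^{1,1}$ with $|\Theta|=1$, (I) $|\Theta'(s)|\to\infty$ as $|s|\to\infty$, (II) $|\Theta'|$ decreasing on $(-\infty,0)$, increasing on $(0,\infty)$. For small $\varepsilon$, $\nu_1(\varepsilon)<0<\nu_2(\varepsilon)$ satisfy $|\Theta'(\nu_i(\varepsilon))|=\varepsilon^{-a}$, $I_\varepsilon=(\nu_1(\varepsilon),\nu_2(\varepsilon))$; $\Theta_\varepsilon:\mathbb R\to\mathbb R^n$ are $C^{1,1}$ with (III) $\Theta_\varepsilon=\Theta$ on $I_\varepsilon$; (IV) $|\Theta_\varepsilon'|\le|\Theta'|$; (V) $|\Theta_\varepsilon'|$ non-increasing on $(-\infty,0)$, non-decreasing on $(0,\infty)$; (VI) for some $K>0$ and reals $b<1$, $c$ with $a+c<2$: $|\Theta_\varepsilon'|\le K\varepsilon^{-a}$, $|\Theta_\varepsilon''|\le K\varepsilon^{-b}$, $|\Theta_\varepsilon'''|\le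 K\varepsilon^{-c}$; (VII) $|\Theta_\varepsilon'(s)|\le|\Theta_{\varepsilon'}'(s)|$ whenever $\varepsilon>\varepsilon'$; (VIII) $|\Theta_\varepsilon|=1$; (IX) $\Gamma_\varepsilon$ is a $C^{1,1}$ arc-length curve in $\mathbb R^{n+1}$ with relatively parallel adapted frame $N^\varepsilon_j$ and curvature vector $k_\varepsilon$ with $\operatorname{supp}k_\varepsilon\subset I_\varepsilon$ and $k_\varepsilon\cdot\Theta_\varepsilon\equiv0$. With $\tilde f_\varepsilon(s,t)=\sqrt{1+|\Theta_\varepsilon'(s)|^2\varepsilon^2t^2}$, $-\tilde\Delta_\varepsilon$ (the Dirichlet Laplacian of the strip $\{\Gamma_\varepsilon(s)+\varepsilon t\sum_j\Theta^\varepsilon_jN^\varepsilon_j(s)\}$) is the self-adjoint operator in $L^2(\Lambda,\varepsilon\tilde f_\varepsilon\,ds\,dt)$ associated with $\psi\mapsto\int_\Lambda(|\partial_s\psi|^2/\tilde f_\varepsilon^2+|\partial_t\psi|^2/\varepsilon^2)\varepsilon\tilde f_\varepsilon\,ds\,dt$ on $H^1_0(\Lambda)$. $\lambda_j(\cdot)$ are min-max values; $-\Delta_{\mathbb R}+V$ is the form-defined Schrödinger operator in $L^2(\mathbb R)$. *)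

theory Defs
  imports "HOL-Analysis.Analysis"
begin

definition Lambda :: "(real \<times> real) set" where
  "Lambda = UNIV \<times> {-1<..<1}"

definition tsupp :: "('a::topological_space \<Rightarrow> real) \<Rightarrow> 'a set" where
  "tsupp f = closure {z. f z \<noteq> 0}"

text \<open>Test functions: C^1 functions with compact support inside the open set U
  (a form core for H^1_0(U)).\<close>
definition test_fun :: "('a::euclidean_space \<Rightarrow> real) \<Rightarrow> 'a set \<Rightarrow> bool" where
  "test_fun \<phi> U \<longleftrightarrow>
     (\<forall>z. \<phi> differentiable (at z)) \<and>
     (\<forall>v. continuous_on UNIV (\<lambda>z. frechet_derivative \<phi> (at z) v)) \<and>
     compact (tsupp \<phi>) \<and> tsupp \<phi> \<subseteq> U"

definition ds :: "(real \<times> real \<Rightarrow> real) \<Rightarrow> real \<times> real \<Rightarrow> real" where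
  "ds \<psi> z = frechet_derivative \<psi> (at z) (1, 0)"
definition dt :: "(real \<times> real \<Rightarrow> real) \<Rightarrow> real \<times> real \<Rightarrow> real" where
  "dt \<psi> z = frechet_derivative \<psi> (at z) (0, 1)"

text \<open>Weight f_eps(s,t) = sqrt(1 + w(s)^2 eps^2 t^2), with w = |Theta_eps'|.\<close>
definition ftil :: "real \<Rightarrow> (real \<Rightarrow> real) \<Rightarrow> real \<times> real \<Rightarrow> real" where
  "ftil \<epsilon> w z = sqrt (1 + (w (fst z))\<^sup>2 * \<epsilon>\<^sup>2 * (snd z)\<^sup>2)"

definition strip_Q :: "real \<Rightarrow> (real \<Rightarrow> real) \<Rightarrow> (real \<times> real \<Rightarrow> real) \<Rightarrow> real" where
  "strip_Q \<epsilon> w \<psi> = (\<integral>z. ((ds \<psi> z)\<^sup>2 / (ftil \<epsilon> w z)\<^sup>2 + (dt \<psi> z)\<^sup>2 / \<epsilon>\<^sup>2)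
                              * \<epsilon> * ftil \<epsilon> w z \<partial>lborel)"

definition strip_N :: "real \<Rightarrow> (real \<Rightarrow> real) \<Rightarrow> (real \<times> real \<Rightarrow> real) \<Rightarrow> real" where
  "strip_N \<epsilon> w \<psi> = (\<integral>z. (\<psi> z)\<^sup>2 * \<epsilon> * ftil \<epsilon> w z \<partial>lborel)"

definition schr_Q :: "(real \<Rightarrow> real) \<Rightarrow> (real \<Rightarrow> real) \<Rightarrow> real" where
  "schr_Q V u = (\<integral>x. (deriv u x)\<^sup>2 + V x * (u x)\<^sup>2 \<partial>lborel)"

definition L2_N :: "(real \<Rightarrow> real) \<Rightarrow> real" where
  "L2_N u = (\<integral>x. (u x)\<^sup>2 \<partial>lborel)"

definition minmax :: "(('a \<Rightarrow> real) \<Rightarrow> real) \<Rightarrow> (('a \<Rightarrow> real) \<Rightarrow> real)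
                      \<Rightarrow> (('a \<Rightarrow> real) \<Rightarrow> bool) \<Rightarrow> nat \<Rightarrow> ereal" where
  "minmax Q N T j =
     (INF \<phi> \<in> {\<phi>. (\<forall>i<j. T (\<phi> i)) \<and>
                 (\<forall>c. (\<forall>x. (\<Sum>i<j. c i * \<phi> i x) = 0) \<longrightarrow> (\<forall>i<j. c i = 0))}.
        (SUP c \<in> {c. \<exists>i<j. c i \<noteq> 0}.
           ereal (Q (\<lambda>x. \<Sum>i<j. c i * \<phi> i x) / N (\<lambda>x. \<Sum>i<j. c i * \<phi> i x))))"

definition lam_strip :: "real \<Rightarrow> (real \<Rightarrow> real) \<Rightarrow> nat \<Rightarrow> ereal" where
  "lam_strip \<epsilon> w j = minmax (strip_Q \<epsilon> w) (strip_N \<epsilon> w) (\<lambda>\<psi>. test_fun \<psi> Lambda) j"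

definition lam_schr :: "(real \<Rightarrow> real) \<Rightarrow> nat \<Rightarrow> ereal" where
  "lam_schr V j = minmax (schr_Q V) L2_N (\<lambda>u. test_fun u UNIV) j"

end

theory Submission
  imports Defs
begin

definition clamp :: "real \<Rightarrow> real" where "clamp t = max (-1) (min 1 t)"
definition qq :: "real \<Rightarrow> real \<Rightarrow> real" where
  "qq \<eta> y = ((max 0 (y-\<eta>))\<^sup>2 - (max 0 (y-2*\<eta>))\<^sup>2)/(2*\<eta>)"
definition qd :: "real \<Rightarrow> real \<Rightarrow> real" where
  "qd \<eta> y = (max 0 (y-\<eta>) - max 0 (y-2*\<eta>))/\<eta>"
definition chi :: "real \<Rightarrow> real \<Rightarrow> real" where
  "chi \<eta> t = qq \<eta> (cos (pi * clamp t / 2))"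
definition chid :: "real \<Rightarrow> real \<Rightarrow> real" where
  "chid \<eta> t = qd \<eta> (cos (pi * clamp t / 2)) * (-(pi/2) * sin (pi * clamp t / 2))"

lemma sqmax0_deriv: "((\<lambda>y::real. (max 0 y)\<^sup>2) has_real_derivative 2 * max 0 y) (at y)"
proof -
  consider "y > 0" | "y < 0" | "y = 0" by linarith
  then show ?thesis
  proof cases
    case 1
    have "((\<lambda>y::real. y\<^sup>2) has_real_derivative 2 * max 0 y) (at y)"
      using 1 by (auto intro!: derivative_eq_intros)
    then show ?thesis
      by (rule has_field_derivative_transform_within_open[where S="{0<..}"]) (use 1 in auto)
  next
    case 2
    have "((\<lambda>y::real. 0) has_real_derivative 2 * max 0 y) (at y)" using 2 by simp
    then show ?thesis
      by (rule has_field_derivative_transform_within_open[where S="{..<0}"]) (use 2 in auto)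
  next
    case 3
    have "((\<lambda>x. ((max 0 x)\<^sup>2 - (max 0 y)\<^sup>2) / (x - y)) \<longlongrightarrow> 0) (at y)"
    proof -
      have "((\<lambda>x::real. max 0 x) \<longlongrightarrow> max 0 0) (at 0)"
        by (intro tendsto_intros)
      moreover have "\<forall>\<^sub>F x in at 0. max 0 (x::real) = ((max 0 x)\<^sup>2 - (max 0 0)\<^sup>2) / (x - 0)"
        by (auto simp: eventually_at_filter max_def intro!: always_eventually) (simp_all add: power2_eq_square)
      ultimately show ?thesis using 3 by (auto dest: tendsto_cong[THEN iffD1, rotated])
    qed
    then show ?thesis using 3 by (simp add: has_field_derivative_iff)
  qed
qed

lemma sqmax_deriv: "((\<lambda>y::real. (max 0 (y - a))\<^sup>2) has_real_derivative 2 * max 0 (y - a)) (at y)"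
  using sqmax0_deriv[of "y - a"] DERIV_shift[of "\<lambda>y. (max 0 y)\<^sup>2" _ y "-a"] by simp

lemma qq_deriv: "\<eta> > 0 \<Longrightarrow> (qq \<eta> has_real_derivative qd \<eta> y) (at y)"
proof -
  assume h: "\<eta> > 0"
  have "((\<lambda>y. ((max 0 (y-\<eta>))\<^sup>2 - (max 0 (y-2*\<eta>))\<^sup>2)/(2*\<eta>)) has_real_derivative
     (2 * max 0 (y-\<eta>) - 2 * max 0 (y-2*\<eta>))/(2*\<eta>)) (at y)"
    by (intro DERIV_cdivide DERIV_diff sqmax_deriv)
  moreover have "(2 * max 0 (y-\<eta>) - 2 * max 0 (y-2*\<eta>))/(2*\<eta>) = qd \<eta> y"
    using h unfolding qd_def by (simp add: field_simps)
  ultimately show ?thesis unfolding qq_def[abs_def] by simp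
qed


lemma cos_small:
  assumes "0 < \<eta>" "\<eta> \<le> 1" "1 - \<eta>/2 < \<bar>s\<bar>"
  shows "cos (pi * clamp s / 2) < \<eta>"
proof -
  define x where "x = min 1 \<bar>s\<bar>"
  have x: "1 - \<eta>/2 < x" "x \<le> 1" using assms unfolding x_def by auto
  have "\<bar>clamp s\<bar> = x" unfolding x_def clamp_def
    by (cases "s \<ge> 0") (auto simp: min_def max_def)
  then have "\<bar>pi * clamp s / 2\<bar> = pi * x / 2" by (simp add: abs_mult)
  then have "cos (pi * clamp s / 2) = cos (pi * x / 2)" by (metis cos_abs_real)
  also have "\<dots> = sin (pi/2 - pi * x / 2)" by (simp add: cos_sin_eq)
  also have "\<dots> \<le> pi/2 - pi * x / 2" using x by (intro sin_x_le_x) auto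
  also have "\<dots> = pi * (1 - x) / 2" by (simp add: field_simps)
  also have "\<dots> < pi * (\<eta>/2) / 2" using x pi_gt_zero by (intro divide_strict_right_mono mult_strict_left_mono) auto
  also have "\<dots> < \<eta>" using pi_less_4 assms by (simp add: field_simps)
  finally show ?thesis .
qed

lemma qq_zero: "y < \<eta> \<Longrightarrow> 0 < \<eta> \<Longrightarrow> qq \<eta> y = 0"
  unfolding qq_def by (auto simp: max_def)
lemma qd_zero: "y < \<eta> \<Longrightarrow> 0 < \<eta> \<Longrightarrow> qd \<eta> y = 0"
  unfolding qd_def by (auto simp: max_def)
lemma qd_bounds: "0 < \<eta> \<Longrightarrow> 0 \<le> qd \<eta> y \<and> qd \<eta> y \<le> 1"
  unfolding qd_def by (auto simp: max_def field_simps)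
lemma qq_lower: assumes "0 < \<eta>" "0 \<le> y" shows "(qq \<eta> y)\<^sup>2 \<ge> y\<^sup>2 - 4*\<eta>*y"
proof (cases "y \<ge> 2*\<eta>")
  case True
  then have "qq \<eta> y = y - 3*\<eta>/2" using assms unfolding qq_def
    by (simp add: max_def power2_eq_square field_simps)
  moreover have "(y - 3*\<eta>/2)\<^sup>2 \<ge> y\<^sup>2 - 4*\<eta>*y" using True assms
    by (simp add: power2_eq_square algebra_simps)
  ultimately show ?thesis by simp
next
  case False
  then have "y\<^sup>2 - 4*\<eta>*y \<le> 0" using assms mult_right_mono[of y "4*\<eta>" y] by (simp add: power2_eq_square)
  then show ?thesis by (smt (verit) zero_le_power2)
qed

lemma clamp_in: "\<bar>t\<bar> \<le> 1 \<Longrightarrow> clamp t = t" unfolding clamp_def by auto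
lemma clamp_out: "1 < \<bar>t\<bar> \<Longrightarrow> cos (pi * clamp t / 2) = 0" unfolding clamp_def
  by (cases "t > 0") (auto simp: max_def min_def)

lemma chi_out: "0 < \<eta> \<Longrightarrow> 1 < \<bar>t\<bar> \<Longrightarrow> chi \<eta> t = 0 \<and> chid \<eta> t = 0"
  unfolding chi_def chid_def using clamp_out qq_zero qd_zero by auto

lemma chi_deriv:
  assumes "0 < \<eta>" "\<eta> \<le> 1"
  shows "(chi \<eta> has_real_derivative chid \<eta> t) (at t)"
proof (cases "\<bar>t\<bar> < 1")
  case True
  have "((\<lambda>s. qq \<eta> (cos (pi * s / 2))) has_real_derivative
          qd \<eta> (cos (pi * t / 2)) * (- sin (pi * t / 2) * (pi / 2))) (at t)"
    by (rule qq_deriv[OF assms(1), THEN DERIV_chain2]) (auto intro!: derivative_eq_intros)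
  moreover have "qd \<eta> (cos (pi * t / 2)) * (- sin (pi * t / 2) * (pi / 2)) = chid \<eta> t"
    using True clamp_in[of t] unfolding chid_def by simp
  ultimately have "((\<lambda>s. qq \<eta> (cos (pi * s / 2))) has_real_derivative chid \<eta> t) (at t)" by simp
  then show ?thesis
    by (rule has_field_derivative_transform_within_open[where S="{-1<..<1}"])
       (use True clamp_in in \<open>auto simp: chi_def\<close>)
next
  case False
  have z: "chi \<eta> s = 0 \<and> chid \<eta> s = 0" if "1 - \<eta>/2 < \<bar>s\<bar>" for s
    using cos_small[OF assms that] qq_zero qd_zero assms unfolding chi_def chid_def by auto
  have "((\<lambda>s. 0) has_real_derivative chid \<eta> t) (at t)" using z[of t] False assms by simp
  then show ?thesis
    by (rule has_field_derivative_transform_within_open[where S="{s. 1 - \<eta>/2 < \<bar>s\<bar>}"])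
       (use False assms z in \<open>auto intro!: open_Collect_less continuous_intros\<close>)
qed

lemma chi_cont: "0 < \<eta> \<Longrightarrow> continuous_on UNIV (chi \<eta>)" unfolding chi_def[abs_def] qq_def clamp_def
  by (auto intro!: continuous_intros)
lemma chid_cont: "0 < \<eta> \<Longrightarrow> continuous_on UNIV (chid \<eta>)" unfolding chid_def[abs_def] qd_def clamp_def
  by (auto intro!: continuous_intros)

lemma chi_in:
  assumes "0 < \<eta>" "\<bar>t\<bar> \<le> 1"
  shows "(chi \<eta> t)\<^sup>2 \<ge> (cos (pi*t/2))\<^sup>2 - 4*\<eta>*cos (pi*t/2)"
    and "(chid \<eta> t)\<^sup>2 \<le> (pi/2)\<^sup>2 * (sin (pi*t/2))\<^sup>2"
    and "0 \<le> cos (pi*t/2)" "cos (pi*t/2) \<le> 1"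
proof -
  have "-1 \<le> t" "t \<le> 1" using assms by auto
  then have "pi * (-1) \<le> pi * t" "pi * t \<le> pi * 1"
    using mult_left_mono[of t 1 pi] mult_left_mono[of "-1" t pi] pi_ge_zero by auto
  then show c0: "0 \<le> cos (pi*t/2)" by (intro cos_ge_zero) auto
  show "cos (pi*t/2) \<le> 1" by simp
  show "(chi \<eta> t)\<^sup>2 \<ge> (cos (pi*t/2))\<^sup>2 - 4*\<eta>*cos (pi*t/2)"
    using qq_lower[OF assms(1) c0] clamp_in[OF assms(2)] unfolding chi_def by simp
  have "(chid \<eta> t)\<^sup>2 = (qd \<eta> (cos (pi*t/2)))\<^sup>2 * ((pi/2)\<^sup>2 * (sin (pi*t/2))\<^sup>2)"
    using clamp_in[OF assms(2)] unfolding chid_def by (simp add: power_mult_distrib power2_eq_square)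
  also have "\<dots> \<le> 1 * ((pi/2)\<^sup>2 * (sin (pi*t/2))\<^sup>2)"
    using qd_bounds[OF assms(1)] by (intro mult_right_mono) (auto simp: power_le_one)
  finally show "(chid \<eta> t)\<^sup>2 \<le> (pi/2)\<^sup>2 * (sin (pi*t/2))\<^sup>2" by simp
qed


lemma integrable_cc1:
  fixes f :: "real \<Rightarrow> real"
  assumes "continuous_on UNIV f" "\<And>t. 1 < \<bar>t\<bar> \<Longrightarrow> f t = 0"
  shows "integrable lborel f"
proof -
  have "integrable lborel (\<lambda>x. indicator {-1..1} x *\<^sub>R f x)"
    by (rule borel_integrable_compact) (auto intro: continuous_on_subset[OF assms(1)])
  moreover have "f x = 0" if "x \<notin> {-1..1}" for x using assms(2)[of x] that by auto
  then have "(\<lambda>x. indicator {-1..1} x *\<^sub>R f x) = f"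
    by (auto simp: indicator_def fun_eq_iff)
  ultimately show ?thesis by simp
qed

lemma ftc11:
  fixes F G :: "real \<Rightarrow> real"
  assumes "\<And>x. (G has_real_derivative F x) (at x)" "continuous_on UNIV F"
  shows "(\<integral>x. indicator {-1..1} x *\<^sub>R F x \<partial>lborel) = G 1 - G (-1)"
proof -
  have "(LBINT x=ereal (-1)..ereal 1. F x) = G 1 - G (-1)"
    apply (rule interval_integral_FTC_finite[of "-1" 1 F G])
    by (auto intro: continuous_on_subset[OF assms(2)] has_field_derivative_at_within[OF assms(1)]
             simp: has_real_derivative_iff_has_vector_derivative[symmetric])
  then show ?thesis using interval_integral_Icc[of "-1" 1 F] by (simp add: set_lebesgue_integral_def)
qed

lemma integrable_ind11:
  fixes F :: "real \<Rightarrow> real"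
  assumes "continuous_on UNIV F"
  shows "integrable lborel (\<lambda>x. indicator {-1..1} x *\<^sub>R F x)"
  by (rule borel_integrable_compact) (auto intro: continuous_on_subset[OF assms(1)])

lemma sqrt_bounds:
  fixes x :: real assumes "0 \<le> x"
  shows "sqrt (1 + x) \<le> 1 + x/2" "1 + x/2 - x\<^sup>2/8 \<le> sqrt (1 + x)"
proof -
  have "1 + x \<le> (1 + x/2)\<^sup>2" by (simp add: power2_eq_square field_simps)
  then show "sqrt (1 + x) \<le> 1 + x/2" using assms by (simp add: real_sqrt_le_iff')
  show "1 + x/2 - x\<^sup>2/8 \<le> sqrt (1 + x)"
  proof (cases "x \<le> 8")
    case True
    have "(1 + x/2 - x\<^sup>2/8)\<^sup>2 \<le> 1 + x"
    proof -
      have "(1 + x/2 - x\<^sup>2/8)\<^sup>2 = 1 + x - x\<^sup>2/4 + (x\<^sup>2/4) * (1 - x/4)\<^sup>2"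
        by (simp add: power2_eq_square field_simps)
      moreover have "(1 - x/4)\<^sup>2 \<le> 1" using True assms by (simp add: abs_square_le_1)
      moreover have "0 \<le> x\<^sup>2/4" by simp
      ultimately show ?thesis using mult_left_mono[of "(1 - x/4)\<^sup>2" 1 "x\<^sup>2/4"] by linarith
    qed
    then show ?thesis by (rule real_le_rsqrt)
  next
    case False
    have "8 * x \<le> x * x" using False mult_right_mono[of 8 x x] by auto
    then have "x \<le> x\<^sup>2/8" by (simp add: power2_eq_square)
    then have "1 + x/2 - x\<^sup>2/8 \<le> 0" using False by linarith
    then show ?thesis by (smt (verit) real_sqrt_ge_zero assms)
  qed
qed


lemma chi_M:
  assumes "0 < \<eta>" "\<eta> \<le> 1"
  shows "1 - 8*\<eta> \<le> (\<integral>t. (chi \<eta> t)\<^sup>2 \<partial>lborel)"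
proof -
  define F where "F t = (1 + cos (pi*t))/2 - 4*\<eta>" for t
  define G where "G t = t/2 + sin (pi*t)/(2*pi) - 4*\<eta>*t" for t
  have d: "(G has_real_derivative F x) (at x)" for x
    unfolding G_def F_def by (auto intro!: derivative_eq_intros simp: field_simps)
  have cF: "continuous_on UNIV F" unfolding F_def by (auto intro!: continuous_intros)
  have "(\<integral>x. indicator {-1..1} x *\<^sub>R F x \<partial>lborel) = G 1 - G (-1)" by (rule ftc11[OF d cF])
  also have "\<dots> = 1 - 8*\<eta>" unfolding G_def by simp
  finally have e: "(\<integral>x. indicator {-1..1} x *\<^sub>R F x \<partial>lborel) = 1 - 8*\<eta>" .
  have "(\<integral>x. indicator {-1..1} x *\<^sub>R F x \<partial>lborel) \<le> (\<integral>t. (chi \<eta> t)\<^sup>2 \<partial>lborel)"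
  proof (rule integral_mono)
    show "integrable lborel (\<lambda>x. indicator {-1..1} x *\<^sub>R F x)" by (rule integrable_ind11[OF cF])
    show "integrable lborel (\<lambda>t. (chi \<eta> t)\<^sup>2)"
      by (rule integrable_cc1) (use chi_cont[OF assms(1)] chi_out[OF assms(1)] in \<open>auto intro!: continuous_intros\<close>)
    fix t
    show "indicator {-1..1} t *\<^sub>R F t \<le> (chi \<eta> t)\<^sup>2"
    proof (cases "\<bar>t\<bar> \<le> 1")
      case True
      note ci = chi_in[OF assms(1) True]
      have "cos (pi*t) = 2 * (cos (pi*t/2))\<^sup>2 - 1" using cos_double_cos[of "pi*t/2"] by simp
      then have "F t \<le> (cos (pi*t/2))\<^sup>2 - 4*\<eta>*cos (pi*t/2)"
        unfolding F_def using ci(3,4) assms mult_left_mono[of "cos (pi*t/2)" 1 "4*\<eta>"] by auto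
      then show ?thesis using ci(1) True by (auto simp: indicator_def abs_le_iff)
    next
      case False then show ?thesis by (auto simp: indicator_def abs_le_iff)
    qed
  qed
  then show ?thesis using e by simp
qed

lemma key1:
  fixes w \<epsilon> :: real
  assumes "0 < \<eta>" "\<eta> \<le> 1"
  shows "(\<integral>t. ((chid \<eta> t)\<^sup>2 - (pi\<^sup>2/4) * (chi \<eta> t)\<^sup>2) * sqrt (1 + w\<^sup>2 * \<epsilon>\<^sup>2 * t\<^sup>2) \<partial>lborel)
         \<le> w\<^sup>2 * \<epsilon>\<^sup>2 / 2 + (pi\<^sup>2/16) * (w\<^sup>2 * \<epsilon>\<^sup>2)\<^sup>2 + 2 * pi\<^sup>2 * \<eta> * (1 + w\<^sup>2 * \<epsilon>\<^sup>2 / 2)"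
proof -
  define A where "A = w\<^sup>2 * \<epsilon>\<^sup>2"
  have A0: "0 \<le> A" unfolding A_def by simp
  define C where "C = (pi\<^sup>2/32) * A\<^sup>2 + pi\<^sup>2 * \<eta> * (1 + A/2)"
  define F where "F t = -(pi\<^sup>2/4) * cos (pi*t) * (1 + A * t\<^sup>2 / 2) + C" for t
  define G where "G t = -(pi\<^sup>2/4) * (sin (pi*t)/pi + (A/2) * (t\<^sup>2 * sin (pi*t)/pi
        + 2*t*cos (pi*t)/pi\<^sup>2 - 2 * sin (pi*t)/pi^3)) + C * t" for t
  have d: "(G has_real_derivative F x) (at x)" for x
    unfolding G_def F_def
    by (auto intro!: derivative_eq_intros simp: field_simps power2_eq_square power3_eq_cube)
  have cF: "continuous_on UNIV F" unfolding F_def by (auto intro!: continuous_intros)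
  have "(\<integral>x. indicator {-1..1} x *\<^sub>R F x \<partial>lborel) = G 1 - G (-1)" by (rule ftc11[OF d cF])
  also have "\<dots> = A/2 + 2 * C" unfolding G_def by (simp add: field_simps power2_eq_square)
  finally have e: "(\<integral>x. indicator {-1..1} x *\<^sub>R F x \<partial>lborel) = A/2 + 2*C" .
  have "(\<integral>t. ((chid \<eta> t)\<^sup>2 - (pi\<^sup>2/4) * (chi \<eta> t)\<^sup>2) * sqrt (1 + A * t\<^sup>2) \<partial>lborel)
        \<le> (\<integral>x. indicator {-1..1} x *\<^sub>R F x \<partial>lborel)"
  proof (rule integral_mono)
    show "integrable lborel (\<lambda>x. indicator {-1..1} x *\<^sub>R F x)" by (rule integrable_ind11[OF cF])
    show "integrable lborel (\<lambda>t. ((chid \<eta> t)\<^sup>2 - (pi\<^sup>2/4) * (chi \<eta> t)\<^sup>2) * sqrt (1 + A * t\<^sup>2))"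
      by (rule integrable_cc1)
         (use chi_cont[OF assms(1)] chid_cont[OF assms(1)] chi_out[OF assms(1)] in \<open>auto intro!: continuous_intros\<close>)
    fix t
    show "((chid \<eta> t)\<^sup>2 - (pi\<^sup>2/4) * (chi \<eta> t)\<^sup>2) * sqrt (1 + A * t\<^sup>2) \<le> indicator {-1..1} t *\<^sub>R F t"
    proof (cases "\<bar>t\<bar> \<le> 1")
      case True
      note ci = chi_in[OF assms(1) True]
      define c where "c = cos (pi*t/2)"
      define s where "s = sin (pi*t/2)"
      define x where "x = A * t\<^sup>2"
      define g where "g = sqrt (1 + x)"
      have x0: "0 \<le> x" unfolding x_def using A0 by simp
      have t21: "t\<^sup>2 \<le> 1" using True by (simp add: abs_square_le_1)
      have xA: "x \<le> A" unfolding x_def using mult_left_mono[OF t21 A0] by simp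
      have x2: "x\<^sup>2 \<le> A\<^sup>2" using x0 xA by (simp add: power_mono)
      have g0: "0 \<le> g" unfolding g_def using x0 by simp
      note sb = sqrt_bounds[OF x0, folded g_def]
      have cos2: "cos (pi*t) = c\<^sup>2 - s\<^sup>2" unfolding c_def s_def using cos_double[of "pi*t/2"] by simp
      have h1: "(chid \<eta> t)\<^sup>2 - (pi\<^sup>2/4) * (chi \<eta> t)\<^sup>2 \<le> -(pi\<^sup>2/4) * cos (pi*t) + pi\<^sup>2 * \<eta> * c"
      proof -
        have "(chid \<eta> t)\<^sup>2 \<le> (pi\<^sup>2/4) * s\<^sup>2" using ci(2) unfolding s_def by (simp add: power_divide)
        moreover have "(pi\<^sup>2/4) * (c\<^sup>2 - 4*\<eta>*c) \<le> (pi\<^sup>2/4) * (chi \<eta> t)\<^sup>2"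
          using ci(1) unfolding c_def by (intro mult_left_mono) auto
        ultimately show ?thesis unfolding cos2 by (simp add: algebra_simps)
      qed
      have h3: "- cos (pi*t) * g \<le> - cos (pi*t) * (1 + x/2) + x\<^sup>2/8"
      proof (cases "cos (pi*t) \<ge> 0")
        case True
        have "- cos (pi*t) * g \<le> - cos (pi*t) * (1 + x/2 - x\<^sup>2/8)"
          using sb(2) True by (simp add: mult_left_mono)
        moreover have "cos (pi*t) * (x\<^sup>2/8) \<le> 1 * (x\<^sup>2/8)" by (intro mult_right_mono) auto
        ultimately show ?thesis by (simp add: algebra_simps)
      next
        case False
        have "- cos (pi*t) * g \<le> - cos (pi*t) * (1 + x/2)"
          using sb(1) False by (intro mult_left_mono) auto
        then show ?thesis by (smt (verit) zero_le_power2 divide_nonneg_pos)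
      qed
      have h4: "c * g \<le> 1 + A/2"
      proof -
        have "c * g \<le> 1 * (1 + x/2)" using ci(3,4) sb(1) g0 unfolding c_def by (intro mult_mono) auto
        then show ?thesis using xA by simp
      qed
      have "((chid \<eta> t)\<^sup>2 - (pi\<^sup>2/4) * (chi \<eta> t)\<^sup>2) * g \<le> (-(pi\<^sup>2/4) * cos (pi*t) + pi\<^sup>2 * \<eta> * c) * g"
        using h1 g0 by (rule mult_right_mono)
      also have "\<dots> = (pi\<^sup>2/4) * (- cos (pi*t) * g) + pi\<^sup>2 * \<eta> * (c * g)" by (simp add: algebra_simps)
      also have "\<dots> \<le> (pi\<^sup>2/4) * (- cos (pi*t) * (1 + x/2) + x\<^sup>2/8) + pi\<^sup>2 * \<eta> * (1 + A/2)"
        using h3 h4 assms by (intro add_mono mult_left_mono) auto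
      also have "\<dots> \<le> (pi\<^sup>2/4) * (- cos (pi*t) * (1 + x/2) + A\<^sup>2/8) + pi\<^sup>2 * \<eta> * (1 + A/2)"
      proof -
        have "(pi\<^sup>2/4)*(x\<^sup>2/8) \<le> (pi\<^sup>2/4)*(A\<^sup>2/8)" using x2 by (intro mult_left_mono) auto
        then show ?thesis by (simp add: distrib_left)
      qed
      also have "\<dots> = F t" unfolding F_def C_def x_def by (simp add: algebra_simps)
      finally show ?thesis using True unfolding g_def x_def by (simp add: indicator_def abs_le_iff)
    next
      case False then show ?thesis using chi_out[OF assms(1), of t] by (auto simp: indicator_def abs_le_iff)
    qed
  qed
  then show ?thesis using e unfolding A_def C_def by (simp add: algebra_simps)
qed


lemma integrable_cc:
  fixes f :: "'a::euclidean_space \<Rightarrow> real"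
  assumes "continuous_on UNIV f" "compact K" "\<And>x. x \<notin> K \<Longrightarrow> f x = 0"
  shows "integrable lborel f"
proof -
  have "integrable lborel (\<lambda>x. indicator K x *\<^sub>R f x)"
    by (rule borel_integrable_compact) (auto intro: continuous_on_subset[OF assms(1)] assms(2))
  moreover have "(\<lambda>x. indicator K x *\<^sub>R f x) = f"
    using assms(3) by (auto simp: indicator_def fun_eq_iff)
  ultimately show ?thesis by simp
qed

lemma L2_pos:
  fixes u :: "real \<Rightarrow> real"
  assumes "continuous_on UNIV u" "integrable lborel (\<lambda>x. (u x)\<^sup>2)" "u x0 \<noteq> 0"
  shows "0 < (\<integral>x. (u x)\<^sup>2 \<partial>lborel)"
proof -
  define e where "e = \<bar>u x0\<bar> / 2"
  have e0: "e > 0" using assms(3) unfolding e_def by simp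
  have "isCont u x0" using assms(1) by (simp add: continuous_on_eq_continuous_at)
  then obtain r where r: "r > 0" "\<And>x. dist x x0 < r \<Longrightarrow> dist (u x) (u x0) < e"
    using e0 unfolding continuous_at_eps_delta by blast
  have lo: "e\<^sup>2 \<le> (u x)\<^sup>2" if "dist x x0 < r" for x
  proof -
    have "\<bar>u x - u x0\<bar> < e" using r(2)[OF that] by (simp add: dist_real_def)
    then have "e \<le> \<bar>u x\<bar>" unfolding e_def by linarith
    then show ?thesis using e0 by (metis abs_le_square_iff abs_of_pos)
  qed
  have "(\<integral>x. indicator {x0 - r/2..x0 + r/2} x *\<^sub>R e\<^sup>2 \<partial>lborel) \<le> (\<integral>x. (u x)\<^sup>2 \<partial>lborel)"
  proof (rule integral_mono)
    show "integrable lborel (\<lambda>x. indicator {x0 - r/2..x0 + r/2} x *\<^sub>R e\<^sup>2)"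
      by (rule borel_integrable_compact) (auto intro: continuous_intros)
    show "integrable lborel (\<lambda>x. (u x)\<^sup>2)" by fact
    fix x show "indicator {x0 - r/2..x0 + r/2} x *\<^sub>R e\<^sup>2 \<le> (u x)\<^sup>2"
      using lo[of x] r(1) by (auto simp: indicator_def dist_real_def)
  qed
  moreover have "(\<integral>x. indicator {x0 - r/2..x0 + r/2} x *\<^sub>R e\<^sup>2 \<partial>lborel) = r * e\<^sup>2"
    using r(1) by (simp add: integral_indicator)
  moreover have "0 < r * e\<^sup>2" using r(1) e0 by simp
  ultimately show ?thesis by linarith
qed

lemma deriv_out_supp:
  fixes u :: "real \<Rightarrow> real"
  assumes "\<And>x. (u has_real_derivative u' x) (at x)" "s \<notin> tsupp u"
  shows "u' s = 0" "u s = 0"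
proof -
  have o: "open (- tsupp u)" unfolding tsupp_def by auto
  have z: "u x = 0" if "x \<in> - tsupp u" for x using that closure_subset[of "{z. u z \<noteq> 0}"] unfolding tsupp_def by auto
  then show "u s = 0" using assms(2) by auto
  have "((\<lambda>x. 0) has_real_derivative u' s) (at s)"
    by (rule has_field_derivative_transform_within_open[OF assms(1) o]) (use assms(2) z in auto)
  then show "u' s = 0" using DERIV_const DERIV_unique by blast
qed

lemma chi_zero_near:
  assumes "0 < \<eta>" "\<eta> \<le> 1" "1 - \<eta>/2 < \<bar>s\<bar>"
  shows "chi \<eta> s = 0" "chid \<eta> s = 0"
  using cos_small[OF assms] qq_zero qd_zero assms unfolding chi_def chid_def by auto

lemma psi_deriv:
  fixes u u' k k' :: "real \<Rightarrow> real"
  assumes "\<And>x. (u has_real_derivative u' x) (at x)" "\<And>x. (k has_real_derivative k' x) (at x)"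
  shows "((\<lambda>z. u (fst z) * k (snd z)) has_derivative
           (\<lambda>h. fst h * u' (fst z) * k (snd z) + u (fst z) * (snd h * k' (snd z)))) (at z)"
proof -
  have du: "((\<lambda>z. u (fst z)) has_derivative (\<lambda>h. fst h * u' (fst z))) (at z)"
    using has_derivative_compose[OF has_derivative_fst[OF has_derivative_ident]
          assms(1)[of "fst z", unfolded has_field_derivative_def]]
    by (simp add: mult.commute)
  have dc: "((\<lambda>z. k (snd z)) has_derivative (\<lambda>h. snd h * k' (snd z))) (at z)"
    using has_derivative_compose[OF has_derivative_snd[OF has_derivative_ident]
          assms(2)[of "snd z", unfolded has_field_derivative_def]]
    by (simp add: mult.commute)
  show ?thesis using has_derivative_mult[OF du dc] by (simp add: algebra_simps)
qed


lemma arith1: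
  fixes ws W \<epsilon> \<eta> E M :: real
  assumes "0 \<le> ws" "ws \<le> W" "0 < \<eta>" "1 - 8*\<eta> \<le> M" "1/2 \<le> M" "0 \<le> E"
    and hE: "4*\<eta>*\<epsilon>\<^sup>2*W\<^sup>2 + (pi\<^sup>2/16)*(W\<^sup>2*\<epsilon>\<^sup>2)\<^sup>2 + 2*pi\<^sup>2*\<eta>*(1 + W\<^sup>2*\<epsilon>\<^sup>2/2) \<le> \<epsilon>\<^sup>2*E/2"
  shows "ws\<^sup>2 * \<epsilon>\<^sup>2 / 2 + (pi\<^sup>2/16) * (ws\<^sup>2 * \<epsilon>\<^sup>2)\<^sup>2 + 2 * pi\<^sup>2 * \<eta> * (1 + ws\<^sup>2 * \<epsilon>\<^sup>2 / 2)
         \<le> \<epsilon>\<^sup>2 * M * (ws\<^sup>2/2 + E)"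
proof -
  define X where "X = ws\<^sup>2 * \<epsilon>\<^sup>2"
  define Y where "Y = W\<^sup>2 * \<epsilon>\<^sup>2"
  define p where "p = pi\<^sup>2"
  define Z where "Z = \<epsilon>\<^sup>2 * E"
  have p0: "p \<ge> 0" unfolding p_def by simp
  have w2: "ws\<^sup>2 \<le> W\<^sup>2" using assms(1,2) by (simp add: power_mono)
  have X0: "0 \<le> X" unfolding X_def by simp
  have a1: "X \<le> Y" unfolding X_def Y_def using w2 by (intro mult_right_mono) auto
  have a2: "X\<^sup>2 \<le> Y\<^sup>2" using a1 X0 by (simp add: power_mono)
  have a3: "\<eta>*X \<le> \<eta>*Y" using a1 assms(3) by simp
  have a4: "p*(\<eta>*X) \<le> p*(\<eta>*Y)" using a3 p0 by (rule mult_left_mono)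
  have a5: "p*X\<^sup>2 \<le> p*Y\<^sup>2" using a2 p0 by (rule mult_left_mono)
  have hE': "4*(\<eta>*Y) + p*Y\<^sup>2/16 + 2*p*\<eta> + p*(\<eta>*Y) \<le> Z/2"
    using hE unfolding Y_def p_def Z_def by (simp add: algebra_simps)
  have b1: "X/2 - 4*(\<eta>*X) \<le> M*X/2"
    using mult_right_mono[OF assms(4) X0] by (simp add: algebra_simps)
  have b2: "Z/2 \<le> M*Z"
    using mult_right_mono[OF assms(5), of Z] unfolding Z_def using assms(6) by (simp add: algebra_simps)
  have lhs: "ws\<^sup>2 * \<epsilon>\<^sup>2 / 2 + (pi\<^sup>2/16) * (ws\<^sup>2 * \<epsilon>\<^sup>2)\<^sup>2 + 2 * pi\<^sup>2 * \<eta> * (1 + ws\<^sup>2 * \<epsilon>\<^sup>2 / 2)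
     = X/2 + p*X\<^sup>2/16 + 2*p*\<eta> + p*(\<eta>*X)" unfolding X_def p_def by (simp add: algebra_simps)
  have rhs: "\<epsilon>\<^sup>2 * M * (ws\<^sup>2/2 + E) = M*X/2 + M*Z" unfolding X_def Z_def by (simp add: algebra_simps)
  show ?thesis unfolding lhs rhs using a3 a4 a5 hE' b1 b2 by linarith
qed


lemma main2d:
  fixes u u' w :: "real \<Rightarrow> real" and \<epsilon> \<eta> W E :: real
  assumes du: "\<And>x. (u has_real_derivative u' x) (at x)"
    and cu': "continuous_on UNIV u'"
    and su: "compact (tsupp u)"
    and nz: "u x0 \<noteq> 0"
    and cw: "continuous_on UNIV w" and w0: "\<And>s. 0 \<le> w s" and wW: "\<And>s. w s \<le> W"
    and ep: "0 < \<epsilon>" and et: "0 < \<eta>" "\<eta> \<le> 1/16" and E0: "0 \<le> E"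
    and hE: "4*\<eta>*\<epsilon>\<^sup>2*W\<^sup>2 + (pi\<^sup>2/16)*(W\<^sup>2*\<epsilon>\<^sup>2)\<^sup>2 + 2*pi\<^sup>2*\<eta>*(1 + W\<^sup>2*\<epsilon>\<^sup>2/2) \<le> \<epsilon>\<^sup>2*E/2"
  shows "strip_Q \<epsilon> w (\<lambda>z. u (fst z) * chi \<eta> (snd z)) / strip_N \<epsilon> w (\<lambda>z. u (fst z) * chi \<eta> (snd z))
         \<le> schr_Q (\<lambda>s. (w s)\<^sup>2/2) u / L2_N u + (pi/(2*\<epsilon>))\<^sup>2 + E"
proof -
  define \<psi> where "\<psi> = (\<lambda>z::real\<times>real. u (fst z) * chi \<eta> (snd z))"
  have et1: "\<eta> \<le> 1" using et by simp
  have cu: "continuous_on UNIV u"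
    using du by (intro continuous_at_imp_continuous_on) (auto intro: DERIV_isCont)
  have dpsi: "(\<psi> has_derivative
           (\<lambda>h. fst h * u' (fst z) * chi \<eta> (snd z) + u (fst z) * (snd h * chid \<eta> (snd z)))) (at z)" for z
    unfolding \<psi>_def by (rule psi_deriv[OF du chi_deriv[OF et(1) et1]])
  have fd: "frechet_derivative \<psi> (at z) =
           (\<lambda>h. fst h * u' (fst z) * chi \<eta> (snd z) + u (fst z) * (snd h * chid \<eta> (snd z)))" for z
    using frechet_derivative_at[OF dpsi[of z]] by simp
  have dsz: "ds \<psi> z = u' (fst z) * chi \<eta> (snd z)" for z
    unfolding ds_def fd by simp
  have dtz: "dt \<psi> z = u (fst z) * chid \<eta> (snd z)" for z
    unfolding dt_def fd by simp
  define g where "g z = sqrt (1 + (w (fst z))\<^sup>2 * \<epsilon>\<^sup>2 * (snd z)\<^sup>2)" for z :: "real \<times> real"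
  have g1: "1 \<le> g z" for z unfolding g_def by simp
  have cg: "continuous_on UNIV g" unfolding g_def
    by (intro continuous_intros continuous_on_compose2[OF cw]) auto
  define M where "M = (\<integral>t. (chi \<eta> t)\<^sup>2 \<partial>lborel)"
  have M1: "1 - 8*\<eta> \<le> M" unfolding M_def by (rule chi_M[OF et(1) et1])
  have M2: "1/2 \<le> M" using M1 et by linarith
  define V where "V s = (w s)\<^sup>2/2" for s
  have zout: "u s = 0" "u' s = 0" if "s \<notin> tsupp u" for s using deriv_out_supp[OF du that] by auto
  have iu2: "integrable lborel (\<lambda>x. (u x)\<^sup>2)"
    by (rule integrable_cc[OF _ su]) (use zout cu in \<open>auto intro!: continuous_intros\<close>)
  have iu'2: "integrable lborel (\<lambda>x. (u' x)\<^sup>2)"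
    by (rule integrable_cc[OF _ su]) (use zout cu' in \<open>auto intro!: continuous_intros\<close>)
  have iVu2: "integrable lborel (\<lambda>x. V x * (u x)\<^sup>2)"
    unfolding V_def by (rule integrable_cc[OF _ su]) (use zout cu cw in \<open>auto intro!: continuous_intros\<close>)
  define L where "L = L2_N u"
  have L0: "0 < L" unfolding L_def L2_N_def by (rule L2_pos[OF cu iu2 nz])
  define Qs where "Qs = schr_Q V u"
  have Qs_eq: "Qs = (\<integral>x. (u' x)\<^sup>2 \<partial>lborel) + (\<integral>x. V x * (u x)\<^sup>2 \<partial>lborel)"
  proof -
    have "deriv u x = u' x" for x using du by (rule DERIV_imp_deriv)
    then show ?thesis unfolding Qs_def schr_Q_def using iu'2 iVu2 by simp
  qed
  have Qs0: "0 \<le> Qs" unfolding Qs_def schr_Q_def V_def by (intro integral_nonneg_AE AE_I2) auto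
  define R where "R = Qs / L"
  have R0: "0 \<le> R" unfolding R_def using Qs0 L0 by simp
  define \<Lambda> where "\<Lambda> = (pi/(2*\<epsilon>))\<^sup>2 + R + E"
  define QI where "QI z = \<epsilon> * (u' (fst z))\<^sup>2 * (chi \<eta> (snd z))\<^sup>2 / g z
                      + (u (fst z))\<^sup>2 * (chid \<eta> (snd z))\<^sup>2 * g z / \<epsilon>" for z
  define NI where "NI z = \<epsilon> * (u (fst z))\<^sup>2 * (chi \<eta> (snd z))\<^sup>2 * g z" for z
  have Qeq: "strip_Q \<epsilon> w \<psi> = integral\<^sup>L lborel QI"
  proof -
    have "((ds \<psi> z)\<^sup>2 / (ftil \<epsilon> w z)\<^sup>2 + (dt \<psi> z)\<^sup>2 / \<epsilon>\<^sup>2) * \<epsilon> * ftil \<epsilon> w z = QI z" for z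
    proof -
      have "ftil \<epsilon> w z = g z" unfolding ftil_def g_def by simp
      moreover have "g z > 0" using g1[of z] by simp
      ultimately show ?thesis unfolding QI_def dsz dtz using ep
        by (simp add: field_simps power2_eq_square)
    qed
    then show ?thesis unfolding strip_Q_def by simp
  qed
  have Neq: "strip_N \<epsilon> w \<psi> = integral\<^sup>L lborel NI"
  proof -
    have "(\<psi> z)\<^sup>2 * \<epsilon> * ftil \<epsilon> w z = NI z" for z
      unfolding NI_def \<psi>_def ftil_def g_def by (simp add: power_mult_distrib)
    then show ?thesis unfolding strip_N_def by simp
  qed
  define K2 where "K2 = tsupp u \<times> {-1..1::real}"
  have cK2: "compact K2" unfolding K2_def using su by (intro compact_Times) auto
  have out2: "u (fst z) = 0 \<and> u' (fst z) = 0 \<or> chi \<eta> (snd z) = 0 \<and> chid \<eta> (snd z) = 0" if "z \<notin> K2" for z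
  proof (cases "fst z \<in> tsupp u")
    case True
    then have "1 < \<bar>snd z\<bar>" using that unfolding K2_def by (cases z) auto
    then show ?thesis using chi_out[OF et(1)] by auto
  next
    case False then show ?thesis using zout by auto
  qed
  have cfst: "continuous_on UNIV (\<lambda>z::real\<times>real. f (fst z))" if "continuous_on UNIV f" for f :: "real \<Rightarrow> real"
    by (rule continuous_on_compose2[OF that continuous_on_fst]) auto
  have csnd: "continuous_on UNIV (\<lambda>z::real\<times>real. f (snd z))" if "continuous_on UNIV f" for f :: "real \<Rightarrow> real"
    by (rule continuous_on_compose2[OF that continuous_on_snd]) auto
  have cQI: "continuous_on UNIV QI" unfolding QI_def
    using g1 ep by (intro continuous_intros cfst csnd cu cu' chi_cont chid_cont et cg) (auto, metis g1 not_one_le_zero)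
  have cNI: "continuous_on UNIV NI" unfolding NI_def
    by (intro continuous_intros cfst csnd cu cu' chi_cont chid_cont et cg)
  have iQI: "integrable lborel QI"
  proof (rule integrable_cc[OF cQI cK2])
    fix z assume "z \<notin> K2" from out2[OF this] show "QI z = 0" unfolding QI_def by auto
  qed
  have iNI: "integrable lborel NI"
  proof (rule integrable_cc[OF cNI cK2])
    fix z assume "z \<notin> K2" from out2[OF this] show "NI z = 0" unfolding NI_def by auto
  qed
  define H where "H z = QI z - \<Lambda> * NI z" for z
  have iH: "integrable lborel H" unfolding H_def using iQI iNI by auto
  have Hint: "integral\<^sup>L lborel H = integral\<^sup>L lborel QI - \<Lambda> * integral\<^sup>L lborel NI"
    unfolding H_def using iQI iNI by simp
  have iH2: "integrable (lborel \<Otimes>\<^sub>M lborel) H" using iH by (simp add: lborel_prod)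
  have fub: "(\<integral>s. (\<integral>t. H (s, t) \<partial>lborel) \<partial>lborel) = integral\<^sup>L lborel H"
    using lborel_pair.integral_fst'[OF iH2] by (simp add: lborel_prod)
  have ifub: "integrable lborel (\<lambda>s. \<integral>t. H (s, t) \<partial>lborel)"
    using lborel_pair.integrable_fst'[OF iH2] .
  define Gs where "Gs s = \<epsilon> * M * ((u' s)\<^sup>2 + V s * (u s)\<^sup>2 - R * (u s)\<^sup>2)" for s
  have iGs: "integrable lborel Gs" unfolding Gs_def using iu'2 iVu2 iu2 by auto
  have Gs_int: "integral\<^sup>L lborel Gs = 0"
  proof -
    have "integral\<^sup>L lborel Gs = \<epsilon> * M * (Qs - R * L)"
      unfolding Gs_def Qs_eq L_def L2_N_def using iu'2 iVu2 iu2 by simp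
    also have "\<dots> = 0" unfolding R_def using L0 by simp
    finally show ?thesis .
  qed
  have pw: "(\<integral>t. H (s, t) \<partial>lborel) \<le> Gs s" for s
  proof -
    define a where "a = u s"
    define b where "b = u' s"
    define ws where "ws = w s"
    define gg where "gg t = sqrt (1 + ws\<^sup>2 * \<epsilon>\<^sup>2 * t\<^sup>2)" for t
    have gg1: "1 \<le> gg t" for t unfolding gg_def by simp
    have cgg: "continuous_on UNIV gg" unfolding gg_def by (intro continuous_intros)
    define F1 where "F1 t = (chi \<eta> t)\<^sup>2 / gg t" for t
    define F2 where "F2 t = (chid \<eta> t)\<^sup>2 * gg t" for t
    define F3 where "F3 t = (chi \<eta> t)\<^sup>2 * gg t" for t
    have o1: "chi \<eta> t = 0 \<and> chid \<eta> t = 0" if "1 < \<bar>t\<bar>" for t using chi_out[OF et(1) that] .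
    have iF1: "integrable lborel F1" unfolding F1_def
      by (rule integrable_cc1) (use o1 gg1 cgg chi_cont[OF et(1)] in \<open>auto intro!: continuous_intros, metis gg1 not_one_le_zero\<close>)
    have iF2: "integrable lborel F2" unfolding F2_def
      by (rule integrable_cc1) (use o1 cgg chid_cont[OF et(1)] in \<open>auto intro!: continuous_intros\<close>)
    have iF3: "integrable lborel F3" unfolding F3_def
      by (rule integrable_cc1) (use o1 cgg chi_cont[OF et(1)] in \<open>auto intro!: continuous_intros\<close>)
    have ichi: "integrable lborel (\<lambda>t. (chi \<eta> t)\<^sup>2)"
      by (rule integrable_cc1) (use o1 chi_cont[OF et(1)] in \<open>auto intro!: continuous_intros\<close>)
    have Hst: "H (s, t) = \<epsilon> * b\<^sup>2 * F1 t + (a\<^sup>2/\<epsilon>) * F2 t - \<Lambda> * \<epsilon> * a\<^sup>2 * F3 t" for t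
      unfolding H_def QI_def NI_def F1_def F2_def F3_def a_def b_def gg_def g_def ws_def by simp
    have I: "(\<integral>t. H (s, t) \<partial>lborel) = \<epsilon> * b\<^sup>2 * integral\<^sup>L lborel F1 + (a\<^sup>2/\<epsilon>) * integral\<^sup>L lborel F2
              - \<Lambda> * \<epsilon> * a\<^sup>2 * integral\<^sup>L lborel F3"
      unfolding Hst using iF1 iF2 iF3 by simp
    have I1: "integral\<^sup>L lborel F1 \<le> M" unfolding M_def
    proof (rule integral_mono[OF iF1 ichi])
      fix t show "F1 t \<le> (chi \<eta> t)\<^sup>2" unfolding F1_def using gg1[of t]
        by (simp add: divide_le_eq_1 divide_le_eq mult_le_cancel_left1 zero_less_mult_iff
             order_trans[OF _ mult_left_mono[of 1 "gg t"]])
    qed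
    have I3: "M \<le> integral\<^sup>L lborel F3" unfolding M_def
    proof (rule integral_mono[OF ichi iF3])
      fix t show "(chi \<eta> t)\<^sup>2 \<le> F3 t" unfolding F3_def using mult_left_mono[OF gg1[of t], of "(chi \<eta> t)\<^sup>2"] by simp
    qed
    have I23: "integral\<^sup>L lborel F2 - (pi\<^sup>2/4) * integral\<^sup>L lborel F3 \<le> \<epsilon>\<^sup>2 * M * (ws\<^sup>2/2 + E)"
    proof -
      have "integral\<^sup>L lborel F2 - (pi\<^sup>2/4) * integral\<^sup>L lborel F3
          = (\<integral>t. ((chid \<eta> t)\<^sup>2 - (pi\<^sup>2/4) * (chi \<eta> t)\<^sup>2) * sqrt (1 + ws\<^sup>2 * \<epsilon>\<^sup>2 * t\<^sup>2) \<partial>lborel)"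
        using iF2 iF3 unfolding F2_def F3_def gg_def by (simp add: algebra_simps)
      also have "\<dots> \<le> ws\<^sup>2 * \<epsilon>\<^sup>2 / 2 + (pi\<^sup>2/16) * (ws\<^sup>2 * \<epsilon>\<^sup>2)\<^sup>2 + 2 * pi\<^sup>2 * \<eta> * (1 + ws\<^sup>2 * \<epsilon>\<^sup>2 / 2)"
        by (rule key1[OF et(1) et1])
      also have "\<dots> \<le> \<epsilon>\<^sup>2 * M * (ws\<^sup>2/2 + E)"
        by (rule arith1[OF w0 wW et(1) M1 M2 E0 hE, of s, folded ws_def])
      finally show ?thesis .
    qed
    have lam: "\<Lambda> * \<epsilon> * a\<^sup>2 = (a\<^sup>2/\<epsilon>) * (pi\<^sup>2/4) + (R + E) * \<epsilon> * a\<^sup>2"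
      unfolding \<Lambda>_def using ep by (simp add: field_simps power2_eq_square)
    have "(\<integral>t. H (s, t) \<partial>lborel) = \<epsilon> * b\<^sup>2 * integral\<^sup>L lborel F1
           + (a\<^sup>2/\<epsilon>) * (integral\<^sup>L lborel F2 - (pi\<^sup>2/4) * integral\<^sup>L lborel F3)
           - (R + E) * \<epsilon> * a\<^sup>2 * integral\<^sup>L lborel F3"
      unfolding I lam by (simp add: algebra_simps)
    also have "\<dots> \<le> \<epsilon> * b\<^sup>2 * M + (a\<^sup>2/\<epsilon>) * (\<epsilon>\<^sup>2 * M * (ws\<^sup>2/2 + E)) - (R + E) * \<epsilon> * a\<^sup>2 * M"
    proof -
      have "\<epsilon> * b\<^sup>2 * integral\<^sup>L lborel F1 \<le> \<epsilon> * b\<^sup>2 * M" using I1 ep by (intro mult_left_mono) auto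
      moreover have "(a\<^sup>2/\<epsilon>) * (integral\<^sup>L lborel F2 - (pi\<^sup>2/4) * integral\<^sup>L lborel F3)
                 \<le> (a\<^sup>2/\<epsilon>) * (\<epsilon>\<^sup>2 * M * (ws\<^sup>2/2 + E))" using I23 ep by (intro mult_left_mono) auto
      moreover have "(R + E) * \<epsilon> * a\<^sup>2 * M \<le> (R + E) * \<epsilon> * a\<^sup>2 * integral\<^sup>L lborel F3"
        using I3 ep R0 E0 by (intro mult_left_mono) auto
      ultimately show ?thesis by linarith
    qed
    also have "\<dots> = Gs s" unfolding Gs_def V_def a_def b_def ws_def using ep
      by (simp add: field_simps power2_eq_square)
    finally show ?thesis .
  qed
  have "integral\<^sup>L lborel H \<le> 0"
    using integral_mono[OF ifub iGs pw] fub Gs_int by simp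
  then have QN: "integral\<^sup>L lborel QI \<le> \<Lambda> * integral\<^sup>L lborel NI" using Hint by simp
  have N0: "0 \<le> integral\<^sup>L lborel NI" unfolding NI_def using ep g1
    by (intro integral_nonneg_AE AE_I2) (auto intro!: mult_nonneg_nonneg simp: order_trans[OF zero_le_one])
  have Lam0: "0 \<le> \<Lambda>" unfolding \<Lambda>_def using R0 E0 by simp
  have "strip_Q \<epsilon> w \<psi> / strip_N \<epsilon> w \<psi> \<le> \<Lambda>"
  proof (cases "integral\<^sup>L lborel NI = 0")
    case True then show ?thesis using Lam0 Qeq Neq by simp
  next
    case False then show ?thesis using N0 QN Qeq Neq by (simp add: divide_le_eq)
  qed
  then show ?thesis unfolding \<psi>_def \<Lambda>_def R_def Qs_def L_def V_def by (simp add: algebra_simps)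
qed


lemma test_fun_real:
  fixes u :: "real \<Rightarrow> real"
  assumes "test_fun u UNIV"
  shows "\<And>x. (u has_real_derivative frechet_derivative u (at x) 1) (at x)"
    "continuous_on UNIV (\<lambda>x. frechet_derivative u (at x) 1)" "compact (tsupp u)"
proof -
  fix x
  have d: "(u has_derivative frechet_derivative u (at x)) (at x)"
    using assms unfolding test_fun_def by (simp add: frechet_derivative_works)
  have l: "linear (frechet_derivative u (at x))"
    using has_derivative_bounded_linear[OF d] bounded_linear.linear by blast
  show "(u has_real_derivative frechet_derivative u (at x) 1) (at x)"
  proof (rule has_derivative_imp_has_field_derivative[OF d])
    fix h :: real
    have "frechet_derivative u (at x) (h * 1) = h * frechet_derivative u (at x) 1"
      by (rule linear_scale_real[OF l])
    then show "h * frechet_derivative u (at x) 1 = frechet_derivative u (at x) h" by simp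
  qed
next
  show "continuous_on UNIV (\<lambda>x. frechet_derivative u (at x) 1)" "compact (tsupp u)"
    using assms unfolding test_fun_def by auto
qed

lemma psi_test:
  fixes u u' :: "real \<Rightarrow> real"
  assumes du: "\<And>x. (u has_real_derivative u' x) (at x)" and cu': "continuous_on UNIV u'"
    and su: "compact (tsupp u)" and et: "0 < \<eta>" "\<eta> \<le> 1"
  shows "test_fun (\<lambda>z. u (fst z) * chi \<eta> (snd z)) Lambda"
proof -
  define \<psi> where "\<psi> = (\<lambda>z::real\<times>real. u (fst z) * chi \<eta> (snd z))"
  have cu: "continuous_on UNIV u"
    using du by (intro continuous_at_imp_continuous_on) (auto intro: DERIV_isCont)
  have dpsi: "(\<psi> has_derivative
           (\<lambda>h. fst h * u' (fst z) * chi \<eta> (snd z) + u (fst z) * (snd h * chid \<eta> (snd z)))) (at z)" for z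
    unfolding \<psi>_def by (rule psi_deriv[OF du chi_deriv[OF et]])
  have fd: "frechet_derivative \<psi> (at z) =
           (\<lambda>h. fst h * u' (fst z) * chi \<eta> (snd z) + u (fst z) * (snd h * chid \<eta> (snd z)))" for z
    using frechet_derivative_at[OF dpsi[of z]] by simp
  have cfst: "continuous_on UNIV (\<lambda>z::real\<times>real. f (fst z))" if "continuous_on UNIV f" for f :: "real \<Rightarrow> real"
    by (rule continuous_on_compose2[OF that continuous_on_fst]) auto
  have csnd: "continuous_on UNIV (\<lambda>z::real\<times>real. f (snd z))" if "continuous_on UNIV f" for f :: "real \<Rightarrow> real"
    by (rule continuous_on_compose2[OF that continuous_on_snd]) auto
  define K3 where "K3 = tsupp u \<times> {-(1-\<eta>/2)..1-\<eta>/2}"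
  have cK3: "compact K3" unfolding K3_def using su by (intro compact_Times) auto
  have clK3: "closed K3" using cK3 by (rule compact_imp_closed)
  have sub: "{z. \<psi> z \<noteq> 0} \<subseteq> K3"
  proof
    fix z assume "z \<in> {z. \<psi> z \<noteq> 0}"
    then have a: "u (fst z) \<noteq> 0" "chi \<eta> (snd z) \<noteq> 0" unfolding \<psi>_def by auto
    have "fst z \<in> tsupp u" using a(1) closure_subset[of "{x. u x \<noteq> 0}"] unfolding tsupp_def by auto
    moreover have "\<bar>snd z\<bar> \<le> 1 - \<eta>/2" using a(2) chi_zero_near[OF et, of "snd z"] by force
    ultimately show "z \<in> K3" unfolding K3_def by (cases z) (auto simp: abs_le_iff)
  qed
  have tK: "tsupp \<psi> \<subseteq> K3" unfolding tsupp_def by (rule closure_minimal[OF sub clK3])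
  have "compact (tsupp \<psi>)"
  proof -
    have "tsupp \<psi> = K3 \<inter> tsupp \<psi>" using tK by auto
    moreover have "closed (tsupp \<psi>)" unfolding tsupp_def by simp
    ultimately show ?thesis using cK3 by (metis compact_Int_closed)
  qed
  moreover have "tsupp \<psi> \<subseteq> Lambda"
    using tK et unfolding K3_def Lambda_def by auto
  moreover have "\<forall>z. \<psi> differentiable (at z)" using dpsi by (auto intro: differentiableI)
  moreover have "\<forall>v. continuous_on UNIV (\<lambda>z. frechet_derivative \<psi> (at z) v)"
    unfolding fd
    by (intro allI continuous_intros cfst csnd cu cu' chi_cont chid_cont et)
  ultimately show ?thesis unfolding test_fun_def \<psi>_def by auto
qed

lemma sum_fun:
  fixes \<phi> :: "nat \<Rightarrow> real \<Rightarrow> real" and c :: "nat \<Rightarrow> real"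
  assumes "\<forall>i<j. test_fun (\<phi> i) UNIV"
  defines "u \<equiv> (\<lambda>x. \<Sum>i<j. c i * \<phi> i x)"
  defines "u' \<equiv> (\<lambda>x. \<Sum>i<j. c i * frechet_derivative (\<phi> i) (at x) 1)"
  shows "\<And>x. (u has_real_derivative u' x) (at x)" "continuous_on UNIV u'" "compact (tsupp u)"
proof -
  fix x show "(u has_real_derivative u' x) (at x)"
    unfolding u_def u'_def by (intro DERIV_sum DERIV_cmult test_fun_real(1)[OF assms(1)[rule_format]]) auto
next
  show "continuous_on UNIV u'" unfolding u'_def by (intro continuous_intros test_fun_real(2)[OF assms(1)[rule_format]]) auto
  have sub: "{x. u x \<noteq> 0} \<subseteq> (\<Union>i<j. tsupp (\<phi> i))"
  proof
    fix x assume "x \<in> {x. u x \<noteq> 0}"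
    then obtain i where "i < j" "\<phi> i x \<noteq> 0" unfolding u_def
      by (metis (mono_tags, lifting) mem_Collect_eq mult_zero_right sum.neutral lessThan_iff)
    then show "x \<in> (\<Union>i<j. tsupp (\<phi> i))"
      unfolding tsupp_def using closure_subset[of "{x. \<phi> i x \<noteq> 0}"] by auto
  qed
  have cU: "compact (\<Union>i<j. tsupp (\<phi> i))" using test_fun_real(3)[OF assms(1)[rule_format]] by (intro compact_UN) auto
  have tK: "tsupp u \<subseteq> (\<Union>i<j. tsupp (\<phi> i))" unfolding tsupp_def
    by (rule closure_minimal[OF sub[unfolded tsupp_def]]) (use cU compact_imp_closed in auto)
  have "tsupp u = (\<Union>i<j. tsupp (\<phi> i)) \<inter> tsupp u" using tK by auto
  moreover have "closed (tsupp u)" unfolding tsupp_def by simp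
  ultimately show "compact (tsupp u)" using cU by (metis compact_Int_closed)
qed


lemma minmax_le:
  assumes "\<And>\<phi>. \<phi> \<in> S1 \<Longrightarrow> \<Psi> \<phi> \<in> S2 \<and> (\<forall>c\<in>C. X2 (\<Psi> \<phi>) c \<le> X1 \<phi> c + k)"
  shows "(INF \<phi>\<in>S2. SUP c\<in>C. ereal (X2 \<phi> c)) \<le> (INF \<phi>\<in>S1. SUP c\<in>C. ereal (X1 \<phi> c)) + ereal k"
proof -
  define A where "A = (INF \<phi>\<in>S2. SUP c\<in>C. ereal (X2 \<phi> c))"
  have "A - ereal k \<le> (SUP c\<in>C. ereal (X1 \<phi> c))" if "\<phi> \<in> S1" for \<phi>
  proof -
    have "A \<le> (SUP c\<in>C. ereal (X2 (\<Psi> \<phi>) c))" unfolding A_def using assms[OF that] by (auto intro: INF_lower)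
    also have "\<dots> \<le> (SUP c\<in>C. ereal (X1 \<phi> c)) + ereal k"
    proof (rule SUP_least)
      fix c assume c: "c \<in> C"
      have "ereal (X2 (\<Psi> \<phi>) c) \<le> ereal (X1 \<phi> c) + ereal k" using assms[OF that] c by auto
      also have "\<dots> \<le> (SUP c\<in>C. ereal (X1 \<phi> c)) + ereal k" using c by (intro add_right_mono SUP_upper)
      finally show "ereal (X2 (\<Psi> \<phi>) c) \<le> (SUP c\<in>C. ereal (X1 \<phi> c)) + ereal k" .
    qed
    finally show ?thesis by (simp add: ereal_minus_le)
  qed
  then have "A - ereal k \<le> (INF \<phi>\<in>S1. SUP c\<in>C. ereal (X1 \<phi> c))" by (rule INF_greatest)
  then show ?thesis unfolding A_def by (simp add: ereal_minus_le)
qed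

lemma chi0: assumes "0 < \<eta>" "\<eta> \<le> 1/16" shows "chi \<eta> 0 \<noteq> 0"
proof -
  have "chi \<eta> 0 = qq \<eta> 1" unfolding chi_def clamp_def by simp
  also have "\<dots> = 1 - 3*\<eta>/2" using assms unfolding qq_def by (simp add: max_def power2_eq_square field_simps)
  finally show ?thesis using assms by simp
qed


theorem mainTheorem11:
  fixes a b c K0 e0 :: real
    and \<Theta> \<Theta>' :: "real \<Rightarrow> real ^ 'n"
    and Th Th1 Th2 :: "real \<Rightarrow> real \<Rightarrow> real ^ 'n"
    and \<nu>1 \<nu>2 :: "real \<Rightarrow> real"
  assumes a_pos: "0 < a" and a_lt: "a < 1/3"
    and b_lt: "b < 1" and ac: "a + c < 2"
    and K0_pos: "K0 > 0" and e0_pos: "e0 > 0"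
    \<comment> \<open>Theta is C^{1,1} with |Theta| = 1\<close>
    and Theta_deriv: "\<forall>s. (\<Theta> has_vector_derivative \<Theta>' s) (at s)"
    and Theta_C11: "\<forall>s. \<exists>r>0. \<exists>L. \<forall>x\<in>ball s r. \<forall>y\<in>ball s r.
                       norm (\<Theta>' x - \<Theta>' y) \<le> L * \<bar>x - y\<bar>"
    and Theta_unit: "\<forall>s. norm (\<Theta> s) = 1"
    \<comment> \<open>(I)\<close>
    and I: "filterlim (\<lambda>s. norm (\<Theta>' s)) at_top at_infinity"
    \<comment> \<open>(II)\<close>
    and II_neg: "\<forall>x y. x < y \<and> y < 0 \<longrightarrow> norm (\<Theta>' y) < norm (\<Theta>' x)"
    and II_pos: "\<forall>x y. 0 < x \<and> x < y \<longrightarrow> norm (\<Theta>' x) < norm (\<Theta>' y)"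
    \<comment> \<open>nu_1, nu_2\<close>
    and nu: "\<forall>\<epsilon>. 0 < \<epsilon> \<and> \<epsilon> < e0 \<longrightarrow>
               \<nu>1 \<epsilon> < 0 \<and> 0 < \<nu>2 \<epsilon> \<and>
               norm (\<Theta>' (\<nu>1 \<epsilon>)) = \<epsilon> powr (-a) \<and> norm (\<Theta>' (\<nu>2 \<epsilon>)) = \<epsilon> powr (-a)"
    \<comment> \<open>regularity of Theta_eps (derivatives Th1, Th2)\<close>
    and Th_deriv: "\<forall>\<epsilon> s. 0 < \<epsilon> \<and> \<epsilon> < e0 \<longrightarrow>
               (Th \<epsilon> has_vector_derivative Th1 \<epsilon> s) (at s) \<and>
               (Th1 \<epsilon> has_vector_derivative Th2 \<epsilon> s) (at s)"
    \<comment> \<open>(III)\<close>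
    and III: "\<forall>\<epsilon> s. 0 < \<epsilon> \<and> \<epsilon> < e0 \<and> \<nu>1 \<epsilon> < s \<and> s < \<nu>2 \<epsilon> \<longrightarrow> Th \<epsilon> s = \<Theta> s"
    \<comment> \<open>(IV)\<close>
    and IV: "\<forall>\<epsilon> s. 0 < \<epsilon> \<and> \<epsilon> < e0 \<longrightarrow> norm (Th1 \<epsilon> s) \<le> norm (\<Theta>' s)"
    \<comment> \<open>(V)\<close>
    and V_neg: "\<forall>\<epsilon> x y. 0 < \<epsilon> \<and> \<epsilon> < e0 \<and> x \<le> y \<and> y < 0 \<longrightarrow>
                  norm (Th1 \<epsilon> y) \<le> norm (Th1 \<epsilon> x)"
    and V_pos: "\<forall>\<epsilon> x y. 0 < \<epsilon> \<and> \<epsilon> < e0 \<and> 0 < x \<and> x \<le> y \<longrightarrow>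
                  norm (Th1 \<epsilon> x) \<le> norm (Th1 \<epsilon> y)"
    \<comment> \<open>(VI)\<close>
    and VI_1: "\<forall>\<epsilon> s. 0 < \<epsilon> \<and> \<epsilon> < e0 \<longrightarrow> norm (Th1 \<epsilon> s) \<le> K0 * \<epsilon> powr (-a)"
    and VI_2: "\<forall>\<epsilon> s. 0 < \<epsilon> \<and> \<epsilon> < e0 \<longrightarrow> norm (Th2 \<epsilon> s) \<le> K0 * \<epsilon> powr (-b)"
    and VI_3: "\<forall>\<epsilon> s r. 0 < \<epsilon> \<and> \<epsilon> < e0 \<longrightarrow>
                 norm (Th2 \<epsilon> s - Th2 \<epsilon> r) \<le> K0 * \<epsilon> powr (-c) * \<bar>s - r\<bar>"
    \<comment> \<open>(VII)\<close>
    and VII: "\<forall>\<epsilon> \<epsilon>' s. 0 < \<epsilon>' \<and> \<epsilon>' < \<epsilon> \<and> \<epsilon> < e0 \<longrightarrow>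
                 norm (Th1 \<epsilon> s) \<le> norm (Th1 \<epsilon>' s)"
    \<comment> \<open>(VIII)\<close>
    and VIII: "\<forall>\<epsilon> s. 0 < \<epsilon> \<and> \<epsilon> < e0 \<longrightarrow> norm (Th \<epsilon> s) = 1"
  shows "\<exists>K>0. \<forall>j::nat. j \<ge> 1 \<longrightarrow> (\<exists>\<epsilon>1>0. \<forall>\<epsilon>. 0 < \<epsilon> \<and> \<epsilon> < \<epsilon>1 \<and> \<epsilon> < e0 \<longrightarrow>
            lam_strip \<epsilon> (\<lambda>s. norm (Th1 \<epsilon> s)) j - ereal ((pi / (2 * \<epsilon>))\<^sup>2)
              \<le> lam_schr (\<lambda>s. (norm (Th1 \<epsilon> s))\<^sup>2 / 2) j
                 + ereal (K * \<epsilon> powr (min (min (4 - 2 * (a + b)) (2 - 2 * b))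
                                            (min (2 - (a + c)) (2 - 4 * a)))))"
proof -
  define d where "d = min (min (4 - 2 * (a + b)) (2 - 2 * b)) (min (2 - (a + c)) (2 - 4 * a))"
  have d0: "0 < d" unfolding d_def using a_pos a_lt b_lt ac by (auto simp: min_def)
  have d4: "2 + d \<le> 4 - 4*a" unfolding d_def by (auto simp: min_def)
  define K where "K = pi\<^sup>2/8 * K0^4 + 2"
  have K0': "K > 0" unfolding K_def by (simp add: add_nonneg_pos)
  have main: "lam_strip \<epsilon> (\<lambda>s. norm (Th1 \<epsilon> s)) j - ereal ((pi / (2 * \<epsilon>))\<^sup>2)
              \<le> lam_schr (\<lambda>s. (norm (Th1 \<epsilon> s))\<^sup>2 / 2) j + ereal (K * \<epsilon> powr d)"
    if ep: "0 < \<epsilon>" "\<epsilon> < 1" "\<epsilon> < e0" for \<epsilon> j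
  proof -
    define w where "w = (\<lambda>s. norm (Th1 \<epsilon> s))"
    define W where "W = K0 * \<epsilon> powr (-a)"
    define E where "E = K * \<epsilon> powr d"
    define D where "D = 4*\<epsilon>\<^sup>2*W\<^sup>2 + 2*pi\<^sup>2 + pi\<^sup>2*\<epsilon>\<^sup>2*W\<^sup>2"
    have D0: "0 < D" unfolding D_def by (intro add_nonneg_pos add_pos_nonneg) auto
    define \<eta> where "\<eta> = min (1/16) (\<epsilon> powr (2+d) / D)"
    have et1': "0 < \<eta>" unfolding \<eta>_def using D0 ep by simp
    have et2': "\<eta> \<le> 1/16" unfolding \<eta>_def by (rule min.cobounded1)
    note et = et1' et2'
    have etD: "\<eta> * D \<le> \<epsilon> powr (2+d)"
    proof -
      have "\<eta> \<le> \<epsilon> powr (2+d) / D" unfolding \<eta>_def by simp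
      then show ?thesis using D0 by (simp add: le_divide_eq)
    qed
    have E0: "0 \<le> E" unfolding E_def using K0' by simp
    have pw2: "(\<epsilon> powr x)\<^sup>2 = \<epsilon> powr (2*x)" for x
      by (simp add: power2_eq_square powr_add[symmetric])
    have e2: "\<epsilon>\<^sup>2 = \<epsilon> powr 2" using powr_realpow[OF ep(1), of 2] by simp
    have WE: "W\<^sup>2 * \<epsilon>\<^sup>2 = K0\<^sup>2 * \<epsilon> powr (2 - 2*a)"
      unfolding W_def e2 by (simp add: power_mult_distrib pw2 powr_add[symmetric])
    have WE2: "(W\<^sup>2 * \<epsilon>\<^sup>2)\<^sup>2 \<le> K0^4 * \<epsilon> powr (2 + d)"
    proof -
      have "(W\<^sup>2 * \<epsilon>\<^sup>2)\<^sup>2 = K0^4 * \<epsilon> powr (4 - 4*a)"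
        unfolding WE by (simp add: power_mult_distrib pw2 algebra_simps)
      also have "\<dots> \<le> K0^4 * \<epsilon> powr (2 + d)"
        using d4 ep by (intro mult_left_mono powr_mono') auto
      finally show ?thesis .
    qed
    have hE: "4*\<eta>*\<epsilon>\<^sup>2*W\<^sup>2 + (pi\<^sup>2/16)*(W\<^sup>2*\<epsilon>\<^sup>2)\<^sup>2 + 2*pi\<^sup>2*\<eta>*(1 + W\<^sup>2*\<epsilon>\<^sup>2/2) \<le> \<epsilon>\<^sup>2*E/2"
    proof -
      have "4*\<eta>*\<epsilon>\<^sup>2*W\<^sup>2 + 2*pi\<^sup>2*\<eta>*(1 + W\<^sup>2*\<epsilon>\<^sup>2/2) = \<eta> * D" unfolding D_def by (simp add: algebra_simps)
      moreover have "(pi\<^sup>2/16)*(W\<^sup>2*\<epsilon>\<^sup>2)\<^sup>2 \<le> (pi\<^sup>2/16)*(K0^4 * \<epsilon> powr (2 + d))"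
        using WE2 by (intro mult_left_mono) auto
      moreover have "\<epsilon>\<^sup>2*E/2 = (pi\<^sup>2/16)*(K0^4 * \<epsilon> powr (2 + d)) + \<epsilon> powr (2+d)"
        unfolding E_def K_def e2 by (simp add: powr_add algebra_simps)
      ultimately show ?thesis using etD by linarith
    qed
    have cw: "continuous_on UNIV w" unfolding w_def
    proof (intro continuous_at_imp_continuous_on ballI continuous_intros)
      fix s
      have "(Th1 \<epsilon> has_vector_derivative Th2 \<epsilon> s) (at s)" using Th_deriv ep by auto
      then show "isCont (Th1 \<epsilon>) s"
        by (metis has_vector_derivative_def has_derivative_continuous)
    qed
    have w0: "\<And>s. 0 \<le> w s" unfolding w_def by simp
    have wW: "\<And>s. w s \<le> W" unfolding w_def W_def using VI_1 ep by auto
    have mm: "minmax (strip_Q \<epsilon> w) (strip_N \<epsilon> w) (\<lambda>\<psi>. test_fun \<psi> Lambda) j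
           \<le> minmax (schr_Q (\<lambda>s. (w s)\<^sup>2/2)) L2_N (\<lambda>u. test_fun u UNIV) j + ereal ((pi/(2*\<epsilon>))\<^sup>2 + E)"
      unfolding minmax_def
    proof (rule minmax_le[where \<Psi>="\<lambda>\<phi> i z. \<phi> i (fst z) * chi \<eta> (snd z)"])
      fix \<phi> :: "nat \<Rightarrow> real \<Rightarrow> real"
      assume "\<phi> \<in> {\<phi>. (\<forall>i<j. test_fun (\<phi> i) UNIV) \<and>
                 (\<forall>c. (\<forall>x. (\<Sum>i<j. c i * \<phi> i x) = 0) \<longrightarrow> (\<forall>i<j. c i = 0))}"
      then have tf: "\<forall>i<j. test_fun (\<phi> i) UNIV"
        and li: "\<And>c. (\<forall>x. (\<Sum>i<j. c i * \<phi> i x) = 0) \<Longrightarrow> (\<forall>i<j. c i = 0)" by auto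
      have et1: "\<eta> \<le> 1" using et by simp
      have sumeq: "(\<lambda>x. \<Sum>i<j. c i * (\<phi> i (fst x) * chi \<eta> (snd x)))
                 = (\<lambda>z. (\<Sum>i<j. c i * \<phi> i (fst z)) * chi \<eta> (snd z))" for c
        by (simp add: sum_distrib_right mult.assoc)
      have "\<forall>i<j. test_fun (\<lambda>z. \<phi> i (fst z) * chi \<eta> (snd z)) Lambda"
        using tf by (auto intro!: psi_test[OF test_fun_real(1) test_fun_real(2) test_fun_real(3) et(1) et1])
      moreover have "\<forall>i<j. c i = 0" if "\<forall>x. (\<Sum>i<j. c i * (\<phi> i (fst x) * chi \<eta> (snd x))) = 0" for c
      proof (rule li, rule allI)
        fix y
        have "(\<Sum>i<j. c i * \<phi> i y) * chi \<eta> 0 = 0" using that[rule_format, of "(y, 0)"] sumeq[of c]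
          by (metis fst_conv snd_conv)
        then show "(\<Sum>i<j. c i * \<phi> i y) = 0" using chi0[OF et] by simp
      qed
      moreover have "strip_Q \<epsilon> w (\<lambda>x. \<Sum>i<j. c i * (\<phi> i (fst x) * chi \<eta> (snd x))) /
               strip_N \<epsilon> w (\<lambda>x. \<Sum>i<j. c i * (\<phi> i (fst x) * chi \<eta> (snd x)))
            \<le> schr_Q (\<lambda>s. (w s)\<^sup>2/2) (\<lambda>x. \<Sum>i<j. c i * \<phi> i x) / L2_N (\<lambda>x. \<Sum>i<j. c i * \<phi> i x)
              + ((pi/(2*\<epsilon>))\<^sup>2 + E)"
        if cC: "c \<in> {c. \<exists>i<j. c i \<noteq> 0}" for c
      proof -
        have "\<not> (\<forall>x. (\<Sum>i<j. c i * \<phi> i x) = 0)" using li[of c] cC by auto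
        then obtain x0 where x0: "(\<Sum>i<j. c i * \<phi> i x0) \<noteq> 0" by auto
        show ?thesis unfolding sumeq
          using main2d[OF sum_fun(1)[OF tf] sum_fun(2)[OF tf] sum_fun(3)[OF tf] x0 cw w0 wW ep(1) et E0 hE]
          by (simp add: add.assoc)
      qed
      ultimately show "(\<lambda>i z. \<phi> i (fst z) * chi \<eta> (snd z)) \<in> {\<phi>. (\<forall>i<j. test_fun (\<phi> i) Lambda) \<and>
                 (\<forall>c. (\<forall>x. (\<Sum>i<j. c i * \<phi> i x) = 0) \<longrightarrow> (\<forall>i<j. c i = 0))} \<and>
          (\<forall>c\<in>{c. \<exists>i<j. c i \<noteq> 0}.
              strip_Q \<epsilon> w (\<lambda>x. \<Sum>i<j. c i * ((\<lambda>i z. \<phi> i (fst z) * chi \<eta> (snd z)) i x)) /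
              strip_N \<epsilon> w (\<lambda>x. \<Sum>i<j. c i * ((\<lambda>i z. \<phi> i (fst z) * chi \<eta> (snd z)) i x))
              \<le> schr_Q (\<lambda>s. (w s)\<^sup>2/2) (\<lambda>x. \<Sum>i<j. c i * \<phi> i x) / L2_N (\<lambda>x. \<Sum>i<j. c i * \<phi> i x)
                 + ((pi/(2*\<epsilon>))\<^sup>2 + E))"
        by auto
    qed
    then have m2: "lam_strip \<epsilon> w j \<le> lam_schr (\<lambda>s. (w s)\<^sup>2/2) j + ereal ((pi/(2*\<epsilon>))\<^sup>2 + E)"
      unfolding lam_strip_def lam_schr_def .
    have "lam_schr (\<lambda>s. (w s)\<^sup>2/2) j + ereal ((pi/(2*\<epsilon>))\<^sup>2 + E)
        = lam_schr (\<lambda>s. (w s)\<^sup>2/2) j + ereal E + ereal ((pi/(2*\<epsilon>))\<^sup>2)"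
      by (simp only: add.assoc plus_ereal.simps(1) add.commute[of E])
    then have "lam_strip \<epsilon> w j \<le> lam_schr (\<lambda>s. (w s)\<^sup>2/2) j + ereal E + ereal ((pi/(2*\<epsilon>))\<^sup>2)"
      using m2 by simp
    then show ?thesis unfolding w_def E_def by (simp add: ereal_minus_le)
  qed
  show ?thesis
    unfolding d_def[symmetric]
    by (rule exI[of _ K], use K0' main in auto, rule exI[of _ 1], auto)
qed


end
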